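(* Let $(b,c)$ be a connected graph over a countable set $X$, $G$ a nilpotent group acting cocompactly on $X$ with $H_{b,c}$ $G$-invariant, and $x_0\in X$. Let $R$ be a normal subgroup of $G$ and $Q(R)=\pi^{-1}(Z(G/R))$ with $\pi:G\to G/R$ the projection. Then every harmonic $k\in\mathrm{ex}\,\mathcal{K}^R$ is $Q(R)$-multiplicative.
   Context: A graph over $X$ is $(b,c)$ with $b:X\times X\to[0,\infty)$, $c:X\to\mathbb{R}$, $\sum_yb(x,y)<\infty$ ($b$ need not be symmetric); connected: any two points are joined by a finite sequence $y_1,\dots,y_n$ with $b(y_i,y_{i+1})>0$. $H_{b,c}f(x)=\sum_yb(x,y)(f(x)-f(y))+c(x)f(x)$ on $\mathrm{Dom}(H)=\{f:\sum_yb(x,y)|f(y)|<\infty\ \forall x\}$; harmonic: $Hf=0$; $\mathcal{H}^+$: nonnegative nonzero harmonic functions. $T_gf(x)=f(g^{-1}x)$; cocompact: $GV=X$ for some finite $V$; $H$ is $G$-invariant if $T_g$ preserves $\mathrm{Dom}(H)$ and $HT_g=T_gH$. $\mathcal{K}$ is the closure in $C(X)$ (product topology) of $\{f\in\mathcal{H}^+:f(x_0)=1\}$, $\mathcal{K}^R=\{f\in\mathcal{K}:T_rf=f\ \forall r\in R\}$, $\mathrm{ex}$ = extreme points. For a subgroup $S$, $f$ is $S$-multiplicative if there is a homomorphism $\gamma:S\to(0,\infty)$ with $T_gf=\gamma(g^{-1})f$ for all $g\in S$. *)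

theory Defs
  imports "HOL-Analysis.Analysis" "HOL-Algebra.Group_Action" "HOL-Algebra.Generated_Groups" "HOL-Library.Countable"
begin

definition graph_on :: "('x \<Rightarrow> 'x \<Rightarrow> real) \<Rightarrow> bool" where
  "graph_on b \<longleftrightarrow> (\<forall>x y. b x y \<ge> 0) \<and> (\<forall>x. b x summable_on UNIV)"

definition connected_graph :: "('x \<Rightarrow> 'x \<Rightarrow> real) \<Rightarrow> bool" where
  "connected_graph b \<longleftrightarrow> (\<forall>x y. (\<lambda>u v. b u v > 0)\<^sup>*\<^sup>* x y)"

definition dom_H :: "('x \<Rightarrow> 'x \<Rightarrow> real) \<Rightarrow> ('x \<Rightarrow> real) set" where
  "dom_H b = {f. \<forall>x. (\<lambda>y. b x y * \<bar>f y\<bar>) summable_on UNIV}"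

definition H_op :: "('x \<Rightarrow> 'x \<Rightarrow> real) \<Rightarrow> ('x \<Rightarrow> real) \<Rightarrow> ('x \<Rightarrow> real) \<Rightarrow> 'x \<Rightarrow> real" where
  "H_op b c f x = (\<Sum>\<^sub>\<infinity>y. b x y * (f x - f y)) + c x * f x"

definition harmonic :: "('x \<Rightarrow> 'x \<Rightarrow> real) \<Rightarrow> ('x \<Rightarrow> real) \<Rightarrow> ('x \<Rightarrow> real) \<Rightarrow> bool" where
  "harmonic b c f \<longleftrightarrow> f \<in> dom_H b \<and> H_op b c f = (\<lambda>x. 0)"

definition pos_harmonic :: "('x \<Rightarrow> 'x \<Rightarrow> real) \<Rightarrow> ('x \<Rightarrow> real) \<Rightarrow> ('x \<Rightarrow> real) set" where
  "pos_harmonic b c = {f. harmonic b c f \<and> (\<forall>x. f x \<ge> 0) \<and> f \<noteq> (\<lambda>x. 0)}"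

definition K_set :: "('x \<Rightarrow> 'x \<Rightarrow> real) \<Rightarrow> ('x \<Rightarrow> real) \<Rightarrow> 'x \<Rightarrow> ('x \<Rightarrow> real) set" where
  "K_set b c x0 = closure {f \<in> pos_harmonic b c. f x0 = 1}"

definition transl :: "('g, 'm) monoid_scheme \<Rightarrow> ('g \<Rightarrow> 'x \<Rightarrow> 'x) \<Rightarrow> 'g \<Rightarrow> ('x \<Rightarrow> real) \<Rightarrow> 'x \<Rightarrow> real" where
  "transl G \<phi> g f = (\<lambda>x. f (\<phi> (inv\<^bsub>G\<^esub> g) x))"

definition cocompact :: "('g, 'm) monoid_scheme \<Rightarrow> ('g \<Rightarrow> 'x \<Rightarrow> 'x) \<Rightarrow> bool" where
  "cocompact G \<phi> \<longleftrightarrow> (\<exists>V. finite V \<and> (\<Union>g\<in>carrier G. \<phi> g ` V) = UNIV)"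

definition H_invariant :: "('g, 'm) monoid_scheme \<Rightarrow> ('g \<Rightarrow> 'x \<Rightarrow> 'x) \<Rightarrow> ('x \<Rightarrow> 'x \<Rightarrow> real) \<Rightarrow> ('x \<Rightarrow> real) \<Rightarrow> bool" where
  "H_invariant G \<phi> b c \<longleftrightarrow> (\<forall>g\<in>carrier G. \<forall>f\<in>dom_H b.
      transl G \<phi> g f \<in> dom_H b \<and> H_op b c (transl G \<phi> g f) = transl G \<phi> g (H_op b c f))"

definition K_fixed :: "('g, 'm) monoid_scheme \<Rightarrow> ('g \<Rightarrow> 'x \<Rightarrow> 'x) \<Rightarrow> ('x \<Rightarrow> 'x \<Rightarrow> real) \<Rightarrow> ('x \<Rightarrow> real) \<Rightarrow> 'x \<Rightarrow> 'g set \<Rightarrow> ('x \<Rightarrow> real) set" where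
  "K_fixed G \<phi> b c x0 R = {f \<in> K_set b c x0. \<forall>r\<in>R. transl G \<phi> r f = f}"

definition extreme_points :: "('x \<Rightarrow> real) set \<Rightarrow> ('x \<Rightarrow> real) set" where
  "extreme_points S = {f \<in> S. \<not> (\<exists>g\<in>S. \<exists>h\<in>S. \<exists>t::real. g \<noteq> h \<and> 0 < t \<and> t < 1 \<and>
       f = (\<lambda>x. t * g x + (1 - t) * h x))}"

definition multiplicative :: "('g, 'm) monoid_scheme \<Rightarrow> ('g \<Rightarrow> 'x \<Rightarrow> 'x) \<Rightarrow> 'g set \<Rightarrow> ('x \<Rightarrow> real) \<Rightarrow> bool" where
  "multiplicative G \<phi> S f \<longleftrightarrow> (\<exists>\<gamma> :: 'g \<Rightarrow> real.
      (\<forall>g\<in>S. \<gamma> g > 0) \<and> (\<forall>g\<in>S. \<forall>h\<in>S. \<gamma> (g \<otimes>\<^bsub>G\<^esub> h) = \<gamma> g * \<gamma> h) \<and>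
      (\<forall>g\<in>S. transl G \<phi> g f = (\<lambda>x. \<gamma> (inv\<^bsub>G\<^esub> g) * f x)))"

definition group_center :: "('g, 'm) monoid_scheme \<Rightarrow> 'g set" where
  "group_center G = {z \<in> carrier G. \<forall>x\<in>carrier G. z \<otimes>\<^bsub>G\<^esub> x = x \<otimes>\<^bsub>G\<^esub> z}"

definition Qsub :: "('g, 'm) monoid_scheme \<Rightarrow> 'g set \<Rightarrow> 'g set" where
  "Qsub G R = {g \<in> carrier G. R #>\<^bsub>G\<^esub> g \<in> group_center (G Mod R)}"

fun lower_central :: "('g, 'm) monoid_scheme \<Rightarrow> nat \<Rightarrow> 'g set" where
  "lower_central G 0 = carrier G"
| "lower_central G (Suc n) = generate G
     {g \<otimes>\<^bsub>G\<^esub> h \<otimes>\<^bsub>G\<^esub> inv\<^bsub>G\<^esub> g \<otimes>\<^bsub>G\<^esub> inv\<^bsub>G\<^esub> h | g h. g \<in> carrier G \<and> h \<in> lower_central G n}"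

definition nilpotent_group :: "('g, 'm) monoid_scheme \<Rightarrow> bool" where
  "nilpotent_group G \<longleftrightarrow> group G \<and> (\<exists>n. lower_central G n = {\<one>\<^bsub>G\<^esub>})"

end

theory Submission
  imports Defs
begin

lemma sdiff:
  fixes f g :: "'a \<Rightarrow> real"
  assumes "f summable_on A" "g summable_on A"
  shows "(\<lambda>x. f x - g x) summable_on A" "(\<Sum>\<^sub>\<infinity>x\<in>A. f x - g x) = infsum f A - infsum g A"
proof -
  have u: "(\<lambda>x. - g x) summable_on A" using assms(2) by (simp add: summable_on_uminus)
  show "(\<lambda>x. f x - g x) summable_on A" using summable_on_add[OF assms(1) u] by simp
  show "(\<Sum>\<^sub>\<infinity>x\<in>A. f x - g x) = infsum f A - infsum g A"
    using infsum_add[OF assms(1) u] by (simp add: infsum_uminus)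
qed

lemma harm_ineq:
  assumes gb: "graph_on b" and h: "harmonic b c f" and nn: "\<And>z. f z \<ge> 0"
  shows "b y z * f z \<le> f y * ((\<Sum>\<^sub>\<infinity>w. b y w) + c y)"
proof -
  have S0: "b y summable_on UNIV" using gb by (simp add: graph_on_def)
  have S1: "(\<lambda>w. b y w * f y) summable_on UNIV" using S0 by (rule summable_on_cmult_left)
  have S2: "(\<lambda>w. b y w * f w) summable_on UNIV"
    using h nn unfolding harmonic_def dom_H_def by simp
  have "H_op b c f y = 0" using h by (simp add: harmonic_def)
  hence E: "(\<Sum>\<^sub>\<infinity>w. b y w * (f y - f w)) + c y * f y = 0" by (simp add: H_op_def)
  have "(\<Sum>\<^sub>\<infinity>w. b y w * (f y - f w)) = (\<Sum>\<^sub>\<infinity>w. b y w * f y - b y w * f w)"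
    by (simp add: algebra_simps)
  also have "\<dots> = (\<Sum>\<^sub>\<infinity>w. b y w * f y) - (\<Sum>\<^sub>\<infinity>w. b y w * f w)"
    using S1 S2 by (rule sdiff(2))
  also have "(\<Sum>\<^sub>\<infinity>w. b y w * f y) = (\<Sum>\<^sub>\<infinity>w. b y w) * f y"
    by (rule infsum_cmult_left') 
  finally have E2: "(\<Sum>\<^sub>\<infinity>w. b y w * f w) = f y * ((\<Sum>\<^sub>\<infinity>w. b y w) + c y)"
    using E by (simp add: algebra_simps)
  have "b y z * f z = (\<Sum>\<^sub>\<infinity>w\<in>{z}. b y w * f w)" by simp
  also have "\<dots> \<le> (\<Sum>\<^sub>\<infinity>w. b y w * f w)"
    apply (rule infsum_mono_neutral)
    using S2 gb nn by (auto simp: graph_on_def)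
  finally show ?thesis using E2 by simp
qed

lemma harnack:
  assumes gb: "graph_on b" and p: "(\<lambda>u v. b u v > 0)\<^sup>*\<^sup>* x y"
  shows "\<exists>C\<ge>0. \<forall>f. harmonic b c f \<and> (\<forall>z. f z \<ge> 0) \<longrightarrow> f y \<le> C * f x"
  using p
proof (induction rule: rtranclp_induct)
  case base
  then show ?case by (rule exI[of _ 1]) simp
next
  case (step y z)
  then obtain C where C: "C \<ge> 0" "\<forall>f. harmonic b c f \<and> (\<forall>z. f z \<ge> 0) \<longrightarrow> f y \<le> C * f x" by blast
  define D where "D = max 0 (((\<Sum>\<^sub>\<infinity>w. b y w) + c y) / b y z)"
  have "\<forall>f. harmonic b c f \<and> (\<forall>z. f z \<ge> 0) \<longrightarrow> f z \<le> (D * C) * f x"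
  proof (intro allI impI)
    fix f assume f: "harmonic b c f \<and> (\<forall>z. f z \<ge> 0)"
    have i: "b y z * f z \<le> f y * ((\<Sum>\<^sub>\<infinity>w. b y w) + c y)"
      using harm_ineq[OF gb] f by blast
    have "f z \<le> f y * ((\<Sum>\<^sub>\<infinity>w. b y w) + c y) / b y z"
      using i step.hyps(2) by (simp add: field_simps)
    also have "\<dots> = (((\<Sum>\<^sub>\<infinity>w. b y w) + c y) / b y z) * f y" by simp
    also have "\<dots> \<le> D * f y" unfolding D_def using f
      by (intro mult_right_mono) auto
    also have "\<dots> \<le> D * (C * f x)" using C f unfolding D_def
      by (simp add: mult_left_mono)
    finally show "f z \<le> (D * C) * f x" by simp
  qed
  moreover have "D * C \<ge> 0" using C unfolding D_def by simp
  ultimately show ?case by blast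
qed

lemma harm_lin:
  assumes gb: "graph_on b" and hf: "harmonic b c f" and hg: "harmonic b c g"
  shows "harmonic b c (\<lambda>x. \<alpha> * f x + \<beta> * g x)"
proof -
  have bnn: "\<And>x y. b x y \<ge> 0" using gb by (simp add: graph_on_def)
  have Sf: "\<And>x. (\<lambda>y. b x y * \<bar>f y\<bar>) summable_on UNIV" using hf by (simp add: harmonic_def dom_H_def)
  have Sg: "\<And>x. (\<lambda>y. b x y * \<bar>g y\<bar>) summable_on UNIV" using hg by (simp add: harmonic_def dom_H_def)
  have dom: "(\<lambda>x. \<alpha> * f x + \<beta> * g x) \<in> dom_H b"
    unfolding dom_H_def
  proof (clarify)
    fix x
    have "(\<lambda>y. \<bar>\<alpha>\<bar> * (b x y * \<bar>f y\<bar>) + \<bar>\<beta>\<bar> * (b x y * \<bar>g y\<bar>)) summable_on UNIV"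
      by (intro summable_on_add summable_on_cmult_right Sf Sg)
    then show "(\<lambda>y. b x y * \<bar>\<alpha> * f y + \<beta> * g y\<bar>) summable_on UNIV"
    proof (rule summable_on_comparison_test)
      fix y
      have "\<bar>\<alpha> * f y + \<beta> * g y\<bar> \<le> \<bar>\<alpha>\<bar> * \<bar>f y\<bar> + \<bar>\<beta>\<bar> * \<bar>g y\<bar>"
        by (metis abs_mult abs_triangle_ineq)
      from mult_left_mono[OF this bnn[of x y]]
      show "b x y * \<bar>\<alpha> * f y + \<beta> * g y\<bar> \<le> \<bar>\<alpha>\<bar> * (b x y * \<bar>f y\<bar>) + \<bar>\<beta>\<bar> * (b x y * \<bar>g y\<bar>)"
        by (simp add: algebra_simps)
      show "0 \<le> b x y * \<bar>\<alpha> * f y + \<beta> * g y\<bar>" using bnn by simp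
    qed
  qed
  have sumd: "(\<lambda>y. b x y * (h x - h y)) summable_on UNIV" if "\<And>x. (\<lambda>y. b x y * \<bar>h y\<bar>) summable_on UNIV" for h x
  proof -
    have a: "(\<lambda>y. b x y * h x) summable_on UNIV"
      using gb by (intro summable_on_cmult_left) (simp add: graph_on_def)
    have "Infinite_Sum.abs_summable_on (\<lambda>y. b x y * h y) UNIV" using that[of x] bnn by (simp add: abs_mult)
    hence "(\<lambda>y. b x y * h y) summable_on UNIV" by (rule abs_summable_summable)
    from sdiff(1)[OF a this] show ?thesis by (simp add: algebra_simps)
  qed
  have H: "H_op b c (\<lambda>x. \<alpha> * f x + \<beta> * g x) x = \<alpha> * H_op b c f x + \<beta> * H_op b c g x" for x
  proof -
    have "(\<Sum>\<^sub>\<infinity>y. b x y * ((\<alpha> * f x + \<beta> * g x) - (\<alpha> * f y + \<beta> * g y)))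
        = (\<Sum>\<^sub>\<infinity>y. \<alpha> * (b x y * (f x - f y)) + \<beta> * (b x y * (g x - g y)))"
      by (simp add: algebra_simps)
    also have "\<dots> = (\<Sum>\<^sub>\<infinity>y. \<alpha> * (b x y * (f x - f y))) + (\<Sum>\<^sub>\<infinity>y. \<beta> * (b x y * (g x - g y)))"
      by (intro infsum_add summable_on_cmult_right sumd Sf Sg)
    also have "\<dots> = \<alpha> * (\<Sum>\<^sub>\<infinity>y. b x y * (f x - f y)) + \<beta> * (\<Sum>\<^sub>\<infinity>y. b x y * (g x - g y))"
      by (simp add: infsum_cmult_right')
    finally show ?thesis unfolding H_op_def by (simp add: algebra_simps)
  qed
  show ?thesis using dom hf hg unfolding harmonic_def by (auto simp: H fun_eq_iff)
qed


theorem lemma5: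
  fixes b :: "'x::countable \<Rightarrow> 'x \<Rightarrow> real" and c :: "'x \<Rightarrow> real"
    and G :: "'g monoid" and \<phi> :: "'g \<Rightarrow> 'x \<Rightarrow> 'x"
    and x0 :: 'x and R :: "'g set" and k :: "'x \<Rightarrow> real"
  assumes "graph_on b" and "connected_graph b"
    and "nilpotent_group G" and "group_action G UNIV \<phi>" and "cocompact G \<phi>"
    and "H_invariant G \<phi> b c"
    and "R \<lhd> G"
    and "harmonic b c k" and "k \<in> extreme_points (K_fixed G \<phi> b c x0 R)"
  shows "multiplicative G \<phi> (Qsub G R) k"
proof -
  note gb = assms(1)
  have grp: "group G" using assms(3) by (simp add: nilpotent_group_def)
  interpret G: group G by (rule grp)
  interpret A: group_action G UNIV \<phi> by (rule assms(4))
  interpret N: normal R G by (rule assms(7))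
  have act: "\<And>g h y. g \<in> carrier G \<Longrightarrow> h \<in> carrier G \<Longrightarrow> \<phi> (g \<otimes>\<^bsub>G\<^esub> h) y = \<phi> g (\<phi> h y)"
    using A.composition_rule by simp
  have one: "\<And>y. \<phi> \<one>\<^bsub>G\<^esub> y = y" using A.id_eq_one by (metis UNIV_I restrict_apply')
  have kK: "k \<in> K_fixed G \<phi> b c x0 R" using assms(9) by (simp add: extreme_points_def)
  have kR: "\<And>r. r \<in> R \<Longrightarrow> transl G \<phi> r k = k" using kK by (simp add: K_fixed_def)
  have kRinv: "k (\<phi> s y) = k y" if s: "s \<in> R" for s y
  proof -
    have "inv\<^bsub>G\<^esub> s \<in> R" using s by (rule N.m_inv_closed)
    from kR[OF this] have "k (\<phi> (inv\<^bsub>G\<^esub> (inv\<^bsub>G\<^esub> s)) y) = k y" unfolding transl_def by metis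
    moreover have "inv\<^bsub>G\<^esub> (inv\<^bsub>G\<^esub> s) = s" using s N.subset by auto
    ultimately show ?thesis by simp
  qed
  have kcl: "k \<in> closure {f \<in> pos_harmonic b c. f x0 = 1}" using kK by (simp add: K_fixed_def K_set_def)
  have "closure {f \<in> pos_harmonic b c. f x0 = 1} \<subseteq> {f. f x0 = 1}"
    by (rule closure_minimal) (auto intro!: closed_Collect_eq)
  with kcl have kx0: "k x0 = 1" by auto
  have kh: "harmonic b c k" by (rule assms(8))
  have Hn: "\<forall>v w. \<exists>C\<ge>0. \<forall>f. harmonic b c f \<and> (\<forall>z. f z \<ge> 0) \<longrightarrow> f w \<le> C * f v"
    using harnack[OF gb] assms(2) unfolding connected_graph_def by blast
  define Cf where "Cf v w = (SOME C. C \<ge> 0 \<and> (\<forall>f. harmonic b c f \<and> (\<forall>z. f z \<ge> 0) \<longrightarrow> f w \<le> C * f v))" for v w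
  have Cf: "Cf v w \<ge> 0 \<and> (\<forall>f. harmonic b c f \<and> (\<forall>z. f z \<ge> 0) \<longrightarrow> f w \<le> Cf v w * f v)" for v w
    unfolding Cf_def by (rule someI_ex) (use Hn in blast)
  have knn: "\<And>x. k x \<ge> 0"
  proof -
    fix x
    have "closure {f \<in> pos_harmonic b c. f x0 = 1} \<subseteq> {f. 0 \<le> f x}"
      by (rule closure_minimal) (auto intro!: closed_Collect_le simp: pos_harmonic_def)
    with kcl show "k x \<ge> 0" by auto
  qed
  have kpos: "\<And>x. k x > 0"
  proof -
    fix x
    have "k x0 \<le> Cf x x0 * k x" using Cf[of x x0] kh knn by blast
    then have "Cf x x0 * k x \<ge> 1" using kx0 by simp
    then show "k x > 0" using knn[of x] by (cases "k x = 0") auto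
  qed
  have htr: "harmonic b c (transl G \<phi> g f)" if g: "g \<in> carrier G" and f: "harmonic b c f" for g f
  proof -
    have "f \<in> dom_H b" using f by (simp add: harmonic_def)
    with assms(6) g have "transl G \<phi> g f \<in> dom_H b" "H_op b c (transl G \<phi> g f) = transl G \<phi> g (H_op b c f)"
      unfolding H_invariant_def by auto
    then show ?thesis using f by (simp add: harmonic_def transl_def)
  qed
  have trk: "transl G \<phi> (inv\<^bsub>G\<^esub> a) k = (\<lambda>y. k (\<phi> a y))" if "a \<in> carrier G" for a
    using that by (simp add: transl_def)
  have qprop: "\<exists>s\<in>R. q \<otimes>\<^bsub>G\<^esub> a = s \<otimes>\<^bsub>G\<^esub> (a \<otimes>\<^bsub>G\<^esub> q)" if q: "q \<in> Qsub G R" and a: "a \<in> carrier G" for q a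
  proof -
    have qc: "q \<in> carrier G" and qz: "R #>\<^bsub>G\<^esub> q \<in> group_center (G Mod R)" using q by (auto simp: Qsub_def)
    have "R #>\<^bsub>G\<^esub> a \<in> carrier (G Mod R)" using a by (simp add: carrier_FactGroup)
    with qz have "(R #>\<^bsub>G\<^esub> q) <#>\<^bsub>G\<^esub> (R #>\<^bsub>G\<^esub> a) = (R #>\<^bsub>G\<^esub> a) <#>\<^bsub>G\<^esub> (R #>\<^bsub>G\<^esub> q)"
      by (simp add: group_center_def)
    hence "R #>\<^bsub>G\<^esub> (q \<otimes>\<^bsub>G\<^esub> a) = R #>\<^bsub>G\<^esub> (a \<otimes>\<^bsub>G\<^esub> q)" using qc a by (simp add: N.rcos_sum)
    moreover have "q \<otimes>\<^bsub>G\<^esub> a \<in> R #>\<^bsub>G\<^esub> (q \<otimes>\<^bsub>G\<^esub> a)"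
      using qc a by (intro G.rcos_self) (auto intro: N.subgroup_axioms)
    ultimately show ?thesis by (auto simp: r_coset_def)
  qed
  have qcomm: "k (\<phi> q (\<phi> a y)) = k (\<phi> a (\<phi> q y))" if q: "q \<in> Qsub G R" and a: "a \<in> carrier G" for q a y
  proof -
    have qc: "q \<in> carrier G" using q by (simp add: Qsub_def)
    obtain s where s: "s \<in> R" "q \<otimes>\<^bsub>G\<^esub> a = s \<otimes>\<^bsub>G\<^esub> (a \<otimes>\<^bsub>G\<^esub> q)" using qprop[OF q a] by blast
    have sc: "s \<in> carrier G" using s N.subset by auto
    have "\<phi> q (\<phi> a y) = \<phi> (q \<otimes>\<^bsub>G\<^esub> a) y" using act qc a by simp
    also have "\<dots> = \<phi> s (\<phi> a (\<phi> q y))" using s(2) act qc a sc by simp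
    finally show ?thesis using kRinv[OF s(1)] by simp
  qed
  obtain V where V: "finite V" "(\<Union>g\<in>carrier G. \<phi> g ` V) = UNIV" using assms(5) by (auto simp: cocompact_def)
  have bound: "k (\<phi> q x) \<le> (\<Sum>v\<in>V. Cf v (\<phi> q v)) * k x" if q: "q \<in> Qsub G R" for q x
  proof -
    obtain a v where a: "a \<in> carrier G" and v: "v \<in> V" and x: "x = \<phi> a v"
      using V(2) by (metis (no_types, lifting) UNIV_I UN_E imageE)
    define f where "f = transl G \<phi> (inv\<^bsub>G\<^esub> a) k"
    have f: "f = (\<lambda>y. k (\<phi> a y))" unfolding f_def using trk[OF a] .
    have fh: "harmonic b c f" unfolding f_def using a kh by (intro htr) auto
    have fnn: "\<forall>z. f z \<ge> 0" using knn f by simp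
    have "k (\<phi> q x) = f (\<phi> q v)" using qcomm[OF q a] x f by simp
    also have "\<dots> \<le> Cf v (\<phi> q v) * f v" using Cf[of v "\<phi> q v"] fh fnn by blast
    also have "\<dots> \<le> (\<Sum>v\<in>V. Cf v (\<phi> q v)) * f v"
      using fnn v V(1) Cf by (intro mult_right_mono member_le_sum) auto
    finally show ?thesis using x f by simp
  qed
  have mult: "k (\<phi> q x) = k (\<phi> q x0) * k x" if q: "q \<in> Qsub G R" for q x
  proof -
    have qc: "q \<in> carrier G" using q by (simp add: Qsub_def)
    define M where "M = (\<Sum>v\<in>V. Cf v (\<phi> q v)) + 1"
    have M0: "M > 0" unfolding M_def using Cf by (smt (verit) sum_nonneg)
    have hM: "k (\<phi> q y) \<le> M * k y" for y using bound[OF q, of y] knn[of y] unfolding M_def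
      by (simp add: algebra_simps)
    define h0 where "h0 = k (\<phi> q x0)"
    have h0: "h0 > 0" unfolding h0_def using kpos by simp
    have h0M: "h0 \<le> M" using hM[of x0] kx0 unfolding h0_def by simp
    define h where "h = transl G \<phi> (inv\<^bsub>G\<^esub> q) k"
    have hf: "h = (\<lambda>y. k (\<phi> q y))" unfolding h_def using trk[OF qc] .
    have hh: "harmonic b c h" unfolding h_def using qc kh by (intro htr) auto
    define a' where "a' = (\<lambda>y. (1/h0) * h y + 0 * h y)"
    define u where "u = (\<lambda>y. 1 * k y + (- 1 / (2*M)) * h y)"
    define u0 where "u0 = 1 - h0 / (2*M)"
    have u0: "u0 > 0" unfolding u0_def using h0M M0 h0 by (simp add: field_simps)
    have ux0: "u x0 = u0" unfolding u_def u0_def using kx0 hf h0_def by simp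
    define b' where "b' = (\<lambda>y. (1/u0) * u y + 0 * u y)"
    have ah: "harmonic b c a'" unfolding a'_def by (rule harm_lin[OF gb hh hh])
    have uh: "harmonic b c u" unfolding u_def by (rule harm_lin[OF gb kh hh])
    have bh: "harmonic b c b'" unfolding b'_def by (rule harm_lin[OF gb uh uh])
    have ann: "a' y \<ge> 0" for y unfolding a'_def hf using h0 knn by simp
    have unn: "u y \<ge> 0" for y
    proof -
      have "h y / (2*M) \<le> M * k y / (2*M)" using hM[of y] M0 hf by (simp add: pos_divide_le_eq mult.commute)
      also have "\<dots> \<le> k y" using M0 knn[of y] by (simp add: field_simps)
      finally show ?thesis unfolding u_def by simp
    qed
    have bnn: "b' y \<ge> 0" for y unfolding b'_def using unn u0 by simp
    have ax0: "a' x0 = 1" unfolding a'_def hf h0_def using h0 h0_def by simp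
    have bx0: "b' x0 = 1" unfolding b'_def using ux0 u0 by simp
    have inS: "f \<in> K_set b c x0" if "harmonic b c f" "\<And>y. f y \<ge> 0" "f x0 = 1" for f
    proof -
      have "f \<noteq> (\<lambda>x. 0)" using that(3) by auto
      then have "f \<in> {f \<in> pos_harmonic b c. f x0 = 1}" using that by (simp add: pos_harmonic_def)
      then show ?thesis unfolding K_set_def by (rule closure_subset[THEN subsetD])
    qed
    have hinv: "h (\<phi> (inv\<^bsub>G\<^esub> r) y) = h y" if r: "r \<in> R" for r y
    proof -
      have ir: "inv\<^bsub>G\<^esub> r \<in> R" using r by (rule N.m_inv_closed)
      have irc: "inv\<^bsub>G\<^esub> r \<in> carrier G" using ir N.subset by auto
      show ?thesis unfolding hf using qcomm[OF q irc, of y] kRinv[OF ir] by simp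
    qed
    have kinv: "k (\<phi> (inv\<^bsub>G\<^esub> r) y) = k y" if r: "r \<in> R" for r y
      using kR[OF r] unfolding transl_def by metis
    have aK: "a' \<in> K_fixed G \<phi> b c x0 R"
      unfolding K_fixed_def using inS[OF ah ann ax0]
      by (auto simp: transl_def a'_def hinv)
    have bK: "b' \<in> K_fixed G \<phi> b c x0 R"
      unfolding K_fixed_def using inS[OF bh bnn bx0]
      by (auto simp: transl_def b'_def u_def hinv kinv)
    define t where "t = h0 / (2*M)"
    have t: "0 < t" "t < 1" unfolding t_def using h0 M0 h0M by (auto simp: field_simps)
    have kdec: "k = (\<lambda>x. t * a' x + (1 - t) * b' x)"
    proof
      fix x
      have "1 - t = u0" unfolding t_def u0_def by simp
      then have e2: "(1 - t) * b' x = u x" unfolding b'_def using u0 by simp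
      have e1: "t * a' x = h x / (2*M)" unfolding t_def a'_def using h0 by simp
      show "k x = t * a' x + (1 - t) * b' x" using e1 e2 unfolding u_def by simp
    qed
    have "a' = b'" using assms(9) aK bK t kdec unfolding extreme_points_def by blast
    hence "k = a'" using kdec by (simp add: algebra_simps)
    then have "k x = h x / h0" unfolding a'_def by (simp add: fun_eq_iff)
    then show ?thesis unfolding hf h0_def using h0 h0_def by (simp add: field_simps)
  qed
  show ?thesis unfolding multiplicative_def
  proof (intro exI[of _ "\<lambda>g. k (\<phi> g x0)"] conjI ballI)
    fix g assume "g \<in> Qsub G R"
    show "k (\<phi> g x0) > 0" by (rule kpos)
  next
    fix g h assume g: "g \<in> Qsub G R" and h: "h \<in> Qsub G R"
    have "g \<in> carrier G" "h \<in> carrier G" using g h by (auto simp: Qsub_def)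
    then have "\<phi> (g \<otimes>\<^bsub>G\<^esub> h) x0 = \<phi> g (\<phi> h x0)" by (rule act)
    then show "k (\<phi> (g \<otimes>\<^bsub>G\<^esub> h) x0) = k (\<phi> g x0) * k (\<phi> h x0)"
      using mult[OF g, of "\<phi> h x0"] by simp
  next
    fix g assume g: "g \<in> Qsub G R"
    have gc: "g \<in> carrier G" using g by (simp add: Qsub_def)
    have bk: "\<phi> g (\<phi> (inv\<^bsub>G\<^esub> g) y) = y" for y
      using act[of g "inv\<^bsub>G\<^esub> g" y] gc one by simp
    have e1: "k x = k (\<phi> g x0) * k (\<phi> (inv\<^bsub>G\<^esub> g) x)" for x
      using mult[OF g, of "\<phi> (inv\<^bsub>G\<^esub> g) x"] bk by simp
    have p: "k (\<phi> g x0) > 0" by (rule kpos)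
    have e0: "k (\<phi> g x0) * k (\<phi> (inv\<^bsub>G\<^esub> g) x0) = 1" using e1[of x0] kx0 by simp
    show "transl G \<phi> g k = (\<lambda>x. k (\<phi> (inv\<^bsub>G\<^esub> g) x0) * k x)"
    proof
      fix x
      have "k (\<phi> (inv\<^bsub>G\<^esub> g) x) = k x / k (\<phi> g x0)" using e1[of x] p by (simp add: field_simps)
      also have "\<dots> = k (\<phi> (inv\<^bsub>G\<^esub> g) x0) * k x" using e0 p by (simp add: field_simps)
      finally show "transl G \<phi> g k x = k (\<phi> (inv\<^bsub>G\<^esub> g) x0) * k x" by (simp add: transl_def)
    qed
  qed
qed

end
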